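(* Let $R$ be a ring. Let $P$ be a polygon divided into subpolygons $P^1$ and $P^2$ by the dissection $\{(t,v),(v,t)\}$; let $V^\alpha$ be the vertex set of $P^\alpha$ and $U^\alpha=V^\alpha\setminus\{t,v\}$. Let $D^\alpha$ be a dissection of $P^\alpha$ ($\alpha=1,2$) and $D=\{(t,v),(v,t)\}\,\dot\cup\,D^1\,\dot\cup\,D^2$. Let $c^\alpha:\operatorname{diag}P^\alpha\to R$ be a weak frieze with respect to $D^\alpha$ for $\alpha=1,2$, and assume $c^1_{tv}=c^2_{tv}$ and $c^1_{vt}=c^2_{vt}$, and that these elements lie in $R^*$. Then there exists a unique map $c:\operatorname{diag}P\to R$ such that (i) $c|_{\operatorname{diag}P^\alpha}=c^\alpha$ for $\alpha=1,2$, and (ii) $c$ is a weak frieze with respect to $D$. Explicitly, for distinct vertices $i,k$: $c_{ik}=c^1_{ik}$ if $i,k\in V^1$; $c_{ik}=c^2_{ik}$ if $i,k\in V^2$ (these agree when $i,k\in\{t,v\}$); $c_{ik}=c^1_{it}(c^1_{vt})^{-1}c^2_{vk}+c^1_{iv}(c^1_{tv})^{-1}c^2_{tk}$ if $i\in U^1$, $k\in U^2$; and $c_{ik}=c^2_{it}(c^2_{vt})^{-1}c^1_{vk}+c^2_{iv}(c^2_{tv})^{-1}c^1_{tk}$ if $i\in U^2$, $k\in U^1$.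
   Context: $R^*$ denotes the invertible elements of $R$. A polygon is a finite set of at least three vertices with a cyclic ordering (thought of as a convex polygon); a subpolygon is a subset of at least three vertices with induced cyclic ordering. $\operatorname{diag}P$ is the set of ordered pairs of distinct vertices. A diagonal is an edge if its endpoints are neighbours, otherwise internal. $(i,k)$ and $(j,\ell)$ cross if $i,j,k,\ell$ are pairwise distinct with $i<j<k<\ell$ or $i<\ell<k<j$ cyclically. A dissection is a set of internal diagonals closed under reversal with no two crossing; the internal diagonal pair $\{(t,v),(v,t)\}$ divides $P$ into the two subpolygons $P^1,P^2$ whose vertex sets are the vertices on either side of $(t,v)$ together with $t,v$. Write $c_{ik}=c(i,k)$, $c_{xx}=0$. A map $c:\operatorname{diag}P\to R$ is a weak frieze with respect to a dissection $D$ if $c_{rs}\in R^*$ for $(r,s)\in D$ and whenever $(i,k)$ crosses $(r,s)$ with $(r,s),(s,r)\in D$, $c_{ik}=c_{ir}c_{sr}^{-1}c_{sk}+c_{is}c_{rs}^{-1}c_{rk}$. *)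

theory Defs
  imports Main
begin

text \<open>Vertices are natural numbers; a polygon is a finite set of at least three
  naturals with the cyclic ordering induced by the usual order. A subpolygon
  carries the induced cyclic ordering, which is again the one induced by the
  natural order.\<close>

definition polygon :: "nat set \<Rightarrow> bool" where
  "polygon P \<longleftrightarrow> finite P \<and> card P \<ge> 3"

definition diag :: "nat set \<Rightarrow> (nat \<times> nat) set" where
  "diag P = {(i, k). i \<in> P \<and> k \<in> P \<and> i \<noteq> k}"

definition cyc3 :: "nat \<Rightarrow> nat \<Rightarrow> nat \<Rightarrow> bool" where
  "cyc3 a b c \<longleftrightarrow> (a < b \<and> b < c) \<or> (b < c \<and> c < a) \<or> (c < a \<and> a < b)"

definition cyc4 :: "nat \<Rightarrow> nat \<Rightarrow> nat \<Rightarrow> nat \<Rightarrow> bool" where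
  "cyc4 a b c d \<longleftrightarrow> cyc3 a b c \<and> cyc3 c d a"

definition crosses :: "nat \<times> nat \<Rightarrow> nat \<times> nat \<Rightarrow> bool" where
  "crosses d e \<longleftrightarrow> (case d of (i, k) \<Rightarrow> case e of (j, l) \<Rightarrow>
      distinct [i, j, k, l] \<and> (cyc4 i j k l \<or> cyc4 i l k j))"

definition is_edge :: "nat set \<Rightarrow> nat \<times> nat \<Rightarrow> bool" where
  "is_edge P d \<longleftrightarrow> (case d of (i, k) \<Rightarrow> (i, k) \<in> diag P \<and>
      ((\<not> (\<exists>j\<in>P. cyc3 i j k)) \<or> (\<not> (\<exists>j\<in>P. cyc3 k j i))))"

definition internal :: "nat set \<Rightarrow> nat \<times> nat \<Rightarrow> bool" where
  "internal P d \<longleftrightarrow> d \<in> diag P \<and> \<not> is_edge P d"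

definition dissection :: "nat set \<Rightarrow> (nat \<times> nat) set \<Rightarrow> bool" where
  "dissection P D \<longleftrightarrow> (\<forall>d\<in>D. internal P d) \<and> (\<forall>(i, k)\<in>D. (k, i) \<in> D)
      \<and> (\<forall>d\<in>D. \<forall>e\<in>D. \<not> crosses d e)"

definition side1 :: "nat set \<Rightarrow> nat \<Rightarrow> nat \<Rightarrow> nat set" where
  "side1 P t v = {t, v} \<union> {j \<in> P. cyc3 t j v}"

definition side2 :: "nat set \<Rightarrow> nat \<Rightarrow> nat \<Rightarrow> nat set" where
  "side2 P t v = {t, v} \<union> {j \<in> P. cyc3 v j t}"

definition is_unit :: "'a::ring_1 \<Rightarrow> bool" where
  "is_unit x \<longleftrightarrow> (\<exists>y. x * y = 1 \<and> y * x = 1)"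

definition ring_inv :: "'a::ring_1 \<Rightarrow> 'a" where
  "ring_inv x = (THE y. x * y = 1 \<and> y * x = 1)"

definition weak_frieze :: "nat set \<Rightarrow> (nat \<times> nat) set \<Rightarrow> (nat \<Rightarrow> nat \<Rightarrow> 'a::ring_1) \<Rightarrow> bool" where
  "weak_frieze P D c \<longleftrightarrow> (\<forall>(r, s)\<in>D. is_unit (c r s)) \<and>
     (\<forall>i k r s. (i, k) \<in> diag P \<and> (r, s) \<in> D \<and> (s, r) \<in> D \<and> crosses (i, k) (r, s) \<longrightarrow>
        c i k = c i r * ring_inv (c s r) * c s k + c i s * ring_inv (c r s) * c r k)"

end

theory Submission
  imports Defs
begin
lemmas toint = of_nat_less_iff[where 'a=int, symmetric] of_nat_eq_iff[where 'a=int, symmetric]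
lemmas unf = crosses_def cyc4_def cyc3_def prod.case distinct.simps list.set set_simps insert_iff empty_iff simp_thms

lemma g_nocross1: "i = t \<or> i = v \<or> cyc3 t i v \<Longrightarrow> k = t \<or> k = v \<or> cyc3 t k v \<Longrightarrow> \<not> crosses (i,k) (t,v)"
  unfolding unf toint by (smt (z3))
lemma g_nocross2: "i = t \<or> i = v \<or> cyc3 v i t \<Longrightarrow> k = t \<or> k = v \<or> cyc3 v k t \<Longrightarrow> \<not> crosses (i,k) (t,v)"
  unfolding unf toint by (smt (z3))
lemma g2: "r = t \<or> r = v \<or> cyc3 t r v \<Longrightarrow> s = t \<or> s = v \<or> cyc3 t s v \<Longrightarrow> \<not> (r \<in> {t,v} \<and> s \<in> {t,v})
  \<Longrightarrow> i = t \<or> i = v \<or> cyc3 v i t \<Longrightarrow> k = t \<or> k = v \<or> cyc3 v k t \<Longrightarrow> \<not> crosses (i,k) (r,s)"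
  unfolding unf toint by (smt (z3))
lemma g3: "cyc3 t i v \<Longrightarrow> cyc3 v k t \<Longrightarrow> r = t \<or> r = v \<or> cyc3 t r v \<Longrightarrow> s = t \<or> s = v \<or> cyc3 t s v
  \<Longrightarrow> crosses (i,k) (r,s) \<Longrightarrow> w = t \<or> w = v \<Longrightarrow> w \<noteq> r \<Longrightarrow> w \<noteq> s \<Longrightarrow> crosses (i,w) (r,s)"
  unfolding unf toint by (smt (z3))
lemma cyc_asym: "cyc3 a b c \<Longrightarrow> \<not> cyc3 c b a"
  unfolding unf toint by (smt (z3))
lemma cyc_tot: "a \<noteq> b \<Longrightarrow> b \<noteq> c \<Longrightarrow> a \<noteq> c \<Longrightarrow> cyc3 a b c \<or> cyc3 c b a"
  unfolding unf toint by (smt (z3))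
lemma cyc_irr: "\<not> cyc3 a a b" "\<not> cyc3 a b b" "\<not> cyc3 a b a"
  unfolding unf toint by (smt (z3))+
lemma crosses_swap2: "crosses d (r,s) = crosses d (s,r)"
  by (cases d) (auto simp: crosses_def cyc4_def)
lemma crosses_swap1: "crosses (i,k) e = crosses (k,i) e"
  by (cases e) (auto simp: crosses_def cyc4_def)
lemma crosses_dist: "crosses (i,k) (r,s) \<Longrightarrow> i \<noteq> k \<and> i \<noteq> r \<and> i \<noteq> s \<and> k \<noteq> r \<and> k \<noteq> s \<and> r \<noteq> s"
  by (auto simp: crosses_def)
lemma g_cross_tv: "cyc3 t i v \<Longrightarrow> cyc3 v k t \<Longrightarrow> crosses (i,k) (t,v)"
  unfolding unf toint by (smt (z3))

lemma side1_iff: "x \<in> side1 P t v \<longleftrightarrow> x = t \<or> x = v \<or> (x \<in> P \<and> cyc3 t x v)"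
  by (auto simp: side1_def)
lemma side2_iff: "x \<in> side2 P t v \<longleftrightarrow> x = t \<or> x = v \<or> (x \<in> P \<and> cyc3 v x t)"
  by (auto simp: side2_def)
lemma side2_eq: "side2 P t v = side1 P v t"
  by (auto simp: side1_def side2_def)

lemma edge1: assumes "t \<noteq> v" shows "is_edge (side1 P t v) (t,v) \<and> is_edge (side1 P t v) (v,t)"
proof -
  have "\<not> (\<exists>j\<in>side1 P t v. cyc3 v j t)"
    by (auto simp: side1_iff cyc_irr dest: cyc_asym)
  then show ?thesis using assms by (auto simp: is_edge_def diag_def side1_iff)
qed

lemma unit_inv: assumes "is_unit x" shows "x * ring_inv x = 1" "ring_inv x * x = 1"
proof -
  obtain y where y: "x * y = 1" "y * x = 1" using assms unfolding is_unit_def by blast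
  have u: "z = y" if "x * z = 1" "z * x = 1" for z
  proof -
    have "z = z * (x * y)" using y by simp
    also have "\<dots> = (z * x) * y" by (simp add: mult.assoc)
    finally show ?thesis using that by simp
  qed
  have "ring_inv x = y" unfolding ring_inv_def
    using y u by (intro the_equality) blast+
  then show "x * ring_inv x = 1" "ring_inv x * x = 1" using y by auto
qed

lemma unit_cancel: assumes "is_unit x"
  shows "x * (ring_inv x * y) = y" "ring_inv x * (x * y) = y" "x * ring_inv x = 1" "ring_inv x * x = 1"
  using unit_inv[OF assms] by (simp_all flip: mult.assoc)

definition glue :: "nat set \<Rightarrow> nat set \<Rightarrow> nat \<Rightarrow> nat \<Rightarrow> (nat \<Rightarrow> nat \<Rightarrow> 'a::ring_1) \<Rightarrow> (nat \<Rightarrow> nat \<Rightarrow> 'a) \<Rightarrow> nat \<Rightarrow> nat \<Rightarrow> 'a" where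
"glue S1 S2 t v c1 c2 i k = (if i \<in> S1 \<and> k \<in> S1 then c1 i k else if i \<in> S2 \<and> k \<in> S2 then c2 i k
   else if i \<in> S1 then c1 i t * ring_inv (c1 v t) * c2 v k + c1 i v * ring_inv (c1 t v) * c2 t k
   else c2 i t * ring_inv (c2 v t) * c1 v k + c2 i v * ring_inv (c2 t v) * c1 t k)"

lemma half:
  fixes c1 c2 :: "nat \<Rightarrow> nat \<Rightarrow> 'a::ring_1"
  assumes tP: "t \<in> P" and vP: "v \<in> P" and tv: "t \<noteq> v"
    and D1: "dissection (side1 P t v) D1" and W1: "weak_frieze (side1 P t v) D1 c1"
    and e1: "c2 t v = c1 t v" and e2: "c2 v t = c1 v t"
    and u1: "is_unit (c1 t v)" and u2: "is_unit (c1 v t)"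
    and rs: "(r,s) \<in> D1" and ik: "(i,k) \<in> diag P" and cr: "crosses (i,k) (r,s)"
  defines "g \<equiv> glue (side1 P t v) (side2 P t v) t v c1 c2"
  shows "g i k = g i r * ring_inv (g s r) * g s k + g i s * ring_inv (g r s) * g r k"
proof -
  let ?S1 = "side1 P t v" let ?S2 = "side2 P t v"
  have sr: "(s,r) \<in> D1" using D1 rs unfolding dissection_def by blast
  have rsint: "internal ?S1 (r,s)" using D1 rs unfolding dissection_def by blast
  then have rsdiag: "(r,s) \<in> diag ?S1" by (simp add: internal_def)
  have rsne: "\<not> (r \<in> {t,v} \<and> s \<in> {t,v})"
    using rsint edge1[OF tv] by (auto simp: internal_def diag_def)
  have rS: "r = t \<or> r = v \<or> cyc3 t r v" and sS: "s = t \<or> s = v \<or> cyc3 t s v"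
    using rsdiag by (auto simp: diag_def side1_iff)
  have rS1: "r \<in> ?S1" and sS1: "s \<in> ?S1" using rsdiag by (auto simp: diag_def)
  have ur: "is_unit (c1 r s)" "is_unit (c1 s r)" using W1 rs sr unfolding weak_frieze_def by blast+
  have W1rel: "\<And>a b. (a,b) \<in> diag ?S1 \<Longrightarrow> crosses (a,b) (r,s) \<Longrightarrow>
      c1 a b = c1 a r * ring_inv (c1 s r) * c1 s b + c1 a s * ring_inv (c1 r s) * c1 r b"
    using W1 rs sr unfolding weak_frieze_def by blast
  have dist: "i \<noteq> k" "i \<noteq> r" "i \<noteq> s" "k \<noteq> r" "k \<noteq> s" "r \<noteq> s" using crosses_dist[OF cr] by auto
  have iP: "i \<in> P" and kP: "k \<in> P" using ik by (auto simp: diag_def)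
  have memb: "x \<in> ?S1 \<or> x \<in> ?S2" if "x \<in> P" for x
    using that tv cyc_tot[of t x v] by (auto simp: side1_iff side2_iff)
  have U1: "x \<in> P \<and> cyc3 t x v \<and> x \<noteq> t \<and> x \<noteq> v" if "x \<in> ?S1" "x \<notin> ?S2" for x
    using that by (auto simp: side1_iff side2_iff)
  have U2: "x \<in> P \<and> cyc3 v x t \<and> x \<noteq> t \<and> x \<noteq> v" if "x \<notin> ?S1" "x \<in> ?S2" for x
    using that by (auto simp: side1_iff side2_iff)
  have notS2: "x \<notin> ?S2" if "x \<in> ?S1" "x \<noteq> t" "x \<noteq> v" for x
    using that cyc_asym by (auto simp: side1_iff side2_iff)
  have tS: "t \<in> ?S1" "v \<in> ?S1" "t \<in> ?S2" "v \<in> ?S2" by (auto simp: side1_iff side2_iff)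
  have g11: "g x y = c1 x y" if "x \<in> ?S1" "y \<in> ?S1" for x y
    using that unfolding g_def glue_def by simp
  consider (A) "i \<in> ?S1" "k \<in> ?S1" | (B) "i \<in> ?S2" "k \<in> ?S2" "\<not> (i \<in> ?S1 \<and> k \<in> ?S1)"
    | (C) "i \<in> ?S1" "i \<notin> ?S2" "k \<notin> ?S1" "k \<in> ?S2" | (D) "i \<notin> ?S1" "i \<in> ?S2" "k \<in> ?S1" "k \<notin> ?S2"
    using memb[OF iP] memb[OF kP] by blast
  then show ?thesis
  proof cases
    case A
    have "(i,k) \<in> diag ?S1" using A dist by (simp add: diag_def)
    from W1rel[OF this cr] show ?thesis using A rS1 sS1 by (simp add: g11)
  next
    case B
    have "i = t \<or> i = v \<or> cyc3 v i t" "k = t \<or> k = v \<or> cyc3 v k t" using B by (auto simp: side2_iff)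
    with g2[OF rS sS rsne] cr show ?thesis by blast
  next
    case C
    have gxk: "g x k = c1 x t * ring_inv (c1 v t) * c2 v k + c1 x v * ring_inv (c1 t v) * c2 t k"
      if "x \<in> ?S1" "x \<notin> ?S2" for x
      using that C unfolding g_def glue_def by simp
    have gtk: "g t k = c2 t k" "g v k = c2 v k" using C tS unfolding g_def glue_def by auto
    have ci: "cyc3 t i v" "cyc3 v k t" using U1[OF C(1,2)] U2[OF C(3,4)] by auto
    have exp: "c1 i w = c1 i r * ring_inv (c1 s r) * c1 s w + c1 i s * ring_inv (c1 r s) * c1 r w"
      if "w = t \<or> w = v" "w \<noteq> r" "w \<noteq> s" for w
    proof (rule W1rel)
      show "(i, w) \<in> diag ?S1" using that C U1[OF C(1,2)] tS by (auto simp: diag_def)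
      show "crosses (i, w) (r, s)" using g3[OF ci rS sS cr that] .
    qed
    have rsU: "x \<notin> ?S2" if "x \<in> {r,s}" "x \<noteq> t" "x \<noteq> v" for x
      using notS2 that rS1 sS1 by auto
    consider (uu) "r \<notin> {t,v}" "s \<notin> {t,v}" | (rt) "r = t" "s \<notin> {t,v}" | (rv) "r = v" "s \<notin> {t,v}"
      | (st) "s = t" "r \<notin> {t,v}" | (sv) "s = v" "r \<notin> {t,v}" using rsne dist by blast
    then show ?thesis
    proof cases
      case uu
      show ?thesis using uu ur u1 u2 rsU[of r] rsU[of s] rS1 sS1 C tS
        by (simp add: gxk g11 exp algebra_simps unit_cancel e1 e2)
    next
      case rt
      show ?thesis using rt ur u1 u2 rsU[of s] rS1 sS1 C tS tv
        by (simp add: gxk g11 gtk exp algebra_simps unit_cancel e1 e2)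
    next
      case rv
      show ?thesis using rv ur u1 u2 rsU[of s] rS1 sS1 C tS tv
        by (simp add: gxk g11 gtk exp algebra_simps unit_cancel e1 e2)
    next
      case st
      show ?thesis using st ur u1 u2 rsU[of r] rS1 sS1 C tS tv
        by (simp add: gxk g11 gtk exp algebra_simps unit_cancel e1 e2)
    next
      case sv
      show ?thesis using sv ur u1 u2 rsU[of r] rS1 sS1 C tS tv
        by (simp add: gxk g11 gtk exp algebra_simps unit_cancel e1 e2)
    qed
  next
    case D
    have gix: "g i x = c2 i t * ring_inv (c2 v t) * c1 v x + c2 i v * ring_inv (c2 t v) * c1 t x"
      if "x \<in> ?S1" "x \<notin> ?S2" for x
      using that D unfolding g_def glue_def by simp
    have git: "g i t = c2 i t" "g i v = c2 i v" using D tS unfolding g_def glue_def by auto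
    have ci: "cyc3 t k v" "cyc3 v i t" using U1[OF D(3,4)] U2[OF D(1,2)] by auto
    have cr': "crosses (k,i) (r,s)" using cr crosses_swap1 by blast
    have exp: "c1 w k = c1 w r * ring_inv (c1 s r) * c1 s k + c1 w s * ring_inv (c1 r s) * c1 r k"
      if "w = t \<or> w = v" "w \<noteq> r" "w \<noteq> s" for w
    proof (rule W1rel)
      show "(w, k) \<in> diag ?S1" using that D U1[OF D(3,4)] tS by (auto simp: diag_def)
      show "crosses (w, k) (r, s)" using g3[OF ci rS sS cr' that] crosses_swap1 by blast
    qed
    have rsU: "x \<notin> ?S2" if "x \<in> {r,s}" "x \<noteq> t" "x \<noteq> v" for x
      using notS2 that rS1 sS1 by auto
    consider (uu) "r \<notin> {t,v}" "s \<notin> {t,v}" | (rt) "r = t" "s \<notin> {t,v}" | (rv) "r = v" "s \<notin> {t,v}"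
      | (st) "s = t" "r \<notin> {t,v}" | (sv) "s = v" "r \<notin> {t,v}" using rsne dist by blast
    then show ?thesis
    proof cases
      case uu
      show ?thesis using uu ur u1 u2 rsU[of r] rsU[of s] rS1 sS1 D tS
        by (simp add: gix g11 exp algebra_simps unit_cancel e1 e2)
    next
      case rt
      show ?thesis using rt ur u1 u2 rsU[of s] rS1 sS1 D tS tv
        by (simp add: gix g11 git exp algebra_simps unit_cancel e1 e2)
    next
      case rv
      show ?thesis using rv ur u1 u2 rsU[of s] rS1 sS1 D tS tv
        by (simp add: gix g11 git exp algebra_simps unit_cancel e1 e2)
    next
      case st
      show ?thesis using st ur u1 u2 rsU[of r] rS1 sS1 D tS tv
        by (simp add: gix g11 git exp algebra_simps unit_cancel e1 e2)
    next
      case sv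
      show ?thesis using sv ur u1 u2 rsU[of r] rS1 sS1 D tS tv
        by (simp add: gix g11 git exp algebra_simps unit_cancel e1 e2)
    qed
  qed
qed

lemma sides_facts:
  assumes "t \<noteq> v" "t \<in> P" "v \<in> P"
  shows "x \<in> P \<Longrightarrow> x \<in> side1 P t v \<or> x \<in> side2 P t v"
    and "x \<in> side1 P t v \<Longrightarrow> x \<in> side2 P t v \<Longrightarrow> x = t \<or> x = v"
    and "x \<in> side1 P t v \<Longrightarrow> x \<in> P" and "x \<in> side2 P t v \<Longrightarrow> x \<in> P"
    and "t \<in> side1 P t v" "v \<in> side1 P t v" "t \<in> side2 P t v" "v \<in> side2 P t v"
  using assms cyc_tot[of t x v] cyc_asym[of t x v] by (auto simp: side1_iff side2_iff)

lemma glue_swap: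
  fixes c1 c2 :: "nat \<Rightarrow> nat \<Rightarrow> 'a::ring_1"
  assumes tv: "t \<noteq> v" "t \<in> P" "v \<in> P"
    and e1: "c2 t v = c1 t v" and e2: "c2 v t = c1 v t"
    and xy: "x \<in> P" "y \<in> P" "x \<noteq> y"
  shows "glue (side1 P v t) (side2 P v t) v t c2 c1 x y = glue (side1 P t v) (side2 P t v) t v c1 c2 x y"
proof -
  note sf = sides_facts[OF tv]
  have s1: "side1 P v t = side2 P t v" and s2: "side2 P v t = side1 P t v" by (simp_all add: side2_eq)
  show ?thesis unfolding s1 s2 glue_def
    using sf(1)[OF xy(1)] sf(1)[OF xy(2)] sf(2)[of x] sf(2)[of y] xy(3) e1 e2
    by (auto simp: add.commute)
qed

theorem lemma2p6:
  fixes P :: "nat set" and t v :: nat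
    and c1 c2 :: "nat \<Rightarrow> nat \<Rightarrow> 'a::ring_1"
  fixes D1 D2 :: "(nat \<times> nat) set"
  assumes "polygon P"
    and "dissection P {(t, v), (v, t)}"
    and "dissection (side1 P t v) D1"
    and "dissection (side2 P t v) D2"
    and "weak_frieze (side1 P t v) D1 c1"
    and "weak_frieze (side2 P t v) D2 c2"
    and "c1 t v = c2 t v" and "c1 v t = c2 v t"
    and "is_unit (c1 t v)" and "is_unit (c1 v t)"
  shows "\<exists>c. (\<forall>(i, k)\<in>diag (side1 P t v). c i k = c1 i k)
           \<and> (\<forall>(i, k)\<in>diag (side2 P t v). c i k = c2 i k)
           \<and> weak_frieze P ({(t, v), (v, t)} \<union> D1 \<union> D2) c
           \<and> (\<forall>i\<in>side1 P t v - {t, v}. \<forall>k\<in>side2 P t v - {t, v}.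
                c i k = c1 i t * ring_inv (c1 v t) * c2 v k + c1 i v * ring_inv (c1 t v) * c2 t k
              \<and> c k i = c2 k t * ring_inv (c2 v t) * c1 v i + c2 k v * ring_inv (c2 t v) * c1 t i)
           \<and> (\<forall>c'. (\<forall>(i, k)\<in>diag (side1 P t v). c' i k = c1 i k)
                 \<and> (\<forall>(i, k)\<in>diag (side2 P t v). c' i k = c2 i k)
                 \<and> weak_frieze P ({(t, v), (v, t)} \<union> D1 \<union> D2) c'
                 \<longrightarrow> (\<forall>(i, k)\<in>diag P. c' i k = c i k))"
proof -
  note dP = assms(2) and dis1 = assms(3) and dis2 = assms(4) and W1 = assms(5) and W2 = assms(6)
  note e1 = assms(7)[symmetric] and e2 = assms(8)[symmetric] and u1 = assms(9) and u2 = assms(10)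
  let ?S1 = "side1 P t v" let ?S2 = "side2 P t v"
  let ?D = "{(t, v), (v, t)} \<union> D1 \<union> D2"
  have "internal P (t,v)" using dP unfolding dissection_def by blast
  then have tP: "t \<in> P" and vP: "v \<in> P" and tv: "t \<noteq> v" by (auto simp: internal_def diag_def)
  note sf = sides_facts[OF tv tP vP]
  define g where "g = glue ?S1 ?S2 t v c1 c2"
  have g11: "g x y = c1 x y" if "x \<in> ?S1" "y \<in> ?S1" for x y
    using that unfolding g_def glue_def by simp
  have g22: "g x y = c2 x y" if "x \<in> ?S2" "y \<in> ?S2" "x \<noteq> y" for x y
  proof (cases "x \<in> ?S1 \<and> y \<in> ?S1")
    case True
    then have "x = t \<or> x = v" "y = t \<or> y = v" using sf(2) that by blast+
    then show ?thesis using True that e1 e2 tv g11 by auto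
  next
    case False
    then show ?thesis using that by (auto simp add: g_def glue_def)
  qed
  have f1: "g x y = c1 x t * ring_inv (c1 v t) * c2 v y + c1 x v * ring_inv (c1 t v) * c2 t y"
    if "x \<in> ?S1" "x \<notin> ?S2" "y \<notin> ?S1" for x y
    using that unfolding g_def glue_def by simp
  have f2: "g x y = c2 x t * ring_inv (c2 v t) * c1 v y + c2 x v * ring_inv (c2 t v) * c1 t y"
    if "x \<notin> ?S1" "y \<notin> ?S2" for x y
    using that unfolding g_def glue_def by simp
  have notS2: "x \<notin> ?S2" if "x \<in> ?S1 - {t,v}" for x using that sf(2) by blast
  have notS1: "x \<notin> ?S1" if "x \<in> ?S2 - {t,v}" for x using that sf(2) by blast
  have D1d: "(r,s) \<in> diag ?S1" if "(r,s) \<in> D1" for r s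
    using dis1 that unfolding dissection_def internal_def by blast
  have D2d: "(r,s) \<in> diag ?S2" if "(r,s) \<in> D2" for r s
    using dis2 that unfolding dissection_def internal_def by blast
  have cls: "(i \<in> ?S1 \<and> k \<in> ?S1) \<or> (i \<in> ?S2 \<and> k \<in> ?S2) \<or>
      (i \<in> ?S1 \<and> i \<notin> ?S2 \<and> k \<notin> ?S1 \<and> k \<in> ?S2) \<or> (i \<notin> ?S1 \<and> i \<in> ?S2 \<and> k \<in> ?S1 \<and> k \<notin> ?S2)"
    if "i \<in> P" "k \<in> P" for i k
    using sf(1)[OF that(1)] sf(1)[OF that(2)] by blast
  have cycU1: "cyc3 t x v" if "x \<in> ?S1" "x \<notin> ?S2" for x using that sf by (auto simp: side1_iff)
  have cycU2: "cyc3 v x t" if "x \<notin> ?S1" "x \<in> ?S2" for x using that sf by (auto simp: side2_iff)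
  have P1: "(\<forall>(i, k)\<in>diag ?S1. g i k = c1 i k)" using g11 by (auto simp: diag_def)
  have P2: "(\<forall>(i, k)\<in>diag ?S2. g i k = c2 i k)" using g22 by (auto simp: diag_def)
  have P4: "\<forall>i\<in>?S1 - {t, v}. \<forall>k\<in>?S2 - {t, v}.
                g i k = c1 i t * ring_inv (c1 v t) * c2 v k + c1 i v * ring_inv (c1 t v) * c2 t k
              \<and> g k i = c2 k t * ring_inv (c2 v t) * c1 v i + c2 k v * ring_inv (c2 t v) * c1 t i"
    using f1 f2 notS1 notS2 by blast
  have P3: "weak_frieze P ?D g"
    unfolding weak_frieze_def
  proof (intro conjI allI impI ballI)
    fix x assume "x \<in> ?D"
    then obtain r s where x: "x = (r,s)" and "(r,s) \<in> ?D" by (cases x) auto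
    then consider "(r,s) = (t,v)" | "(r,s) = (v,t)" | "(r,s) \<in> D1" | "(r,s) \<in> D2" by blast
    then show "case x of (r, s) \<Rightarrow> is_unit (g r s)"
    proof cases
      case 1 then show ?thesis using x u1 g11 sf by auto
    next
      case 2 then show ?thesis using x u2 g11 sf by auto
    next
      case 3 then show ?thesis using x W1 D1d[OF 3] g11 unfolding weak_frieze_def by (auto simp: diag_def)
    next
      case 4 then show ?thesis using x W2 D2d[OF 4] g22 unfolding weak_frieze_def by (auto simp: diag_def)
    qed
  next
    fix i k r s
    assume H: "(i, k) \<in> diag P \<and> (r, s) \<in> ?D \<and> (s, r) \<in> ?D \<and> crosses (i, k) (r, s)"
    then have ik: "(i,k) \<in> diag P" and rsD: "(r,s) \<in> ?D" and cr: "crosses (i,k) (r,s)" by auto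
    have iP: "i \<in> P" and kP: "k \<in> P" using ik by (auto simp: diag_def)
    consider "(r,s) = (t,v)" | "(r,s) = (v,t)" | "(r,s) \<in> D1" | "(r,s) \<in> D2" using rsD by blast
    then show "g i k = g i r * ring_inv (g s r) * g s k + g i s * ring_inv (g r s) * g r k"
    proof cases
      case 3
      show ?thesis unfolding g_def
        by (rule half[OF tP vP tv dis1 W1 e1 e2 u1 u2 3 ik cr])
    next
      case 4
      have rsP: "r \<in> P" "s \<in> P" using D2d[OF 4] sf by (auto simp: diag_def)
      have dist: "i \<noteq> k" "i \<noteq> r" "i \<noteq> s" "k \<noteq> r" "k \<noteq> s" "r \<noteq> s" using crosses_dist[OF cr] by auto
      have dis2': "dissection (side1 P v t) D2" using dis2 by (simp add: side2_eq)
      have W2': "weak_frieze (side1 P v t) D2 c2" using W2 by (simp add: side2_eq)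
      have "glue (side1 P v t) (side2 P v t) v t c2 c1 i k =
            glue (side1 P v t) (side2 P v t) v t c2 c1 i r * ring_inv (glue (side1 P v t) (side2 P v t) v t c2 c1 s r) * glue (side1 P v t) (side2 P v t) v t c2 c1 s k
          + glue (side1 P v t) (side2 P v t) v t c2 c1 i s * ring_inv (glue (side1 P v t) (side2 P v t) v t c2 c1 r s) * glue (side1 P v t) (side2 P v t) v t c2 c1 r k"
        by (rule half[OF vP tP tv[symmetric] dis2' W2' e2[symmetric] e1[symmetric] _ _ 4 ik cr])
          (use u1 u2 e1 e2 in simp_all)
      moreover have "glue (side1 P v t) (side2 P v t) v t c2 c1 x y = g x y" if "x \<in> P" "y \<in> P" "x \<noteq> y" for x y
        unfolding g_def by (rule glue_swap[OF tv tP vP e1 e2 that])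
      ultimately show ?thesis using iP kP rsP dist by (simp add: eq_commute[of r])
    next
      case 1
      have crtv: "crosses (i,k) (t,v)" using cr 1 by simp
      show ?thesis
      proof -
        from cls[OF iP kP] consider "i \<in> ?S1 \<and> k \<in> ?S1" | "i \<in> ?S2 \<and> k \<in> ?S2"
          | "i \<in> ?S1 \<and> i \<notin> ?S2 \<and> k \<notin> ?S1 \<and> k \<in> ?S2" | "i \<notin> ?S1 \<and> i \<in> ?S2 \<and> k \<in> ?S1 \<and> k \<notin> ?S2" by blast
        then show ?thesis
        proof cases
          case 1 then show ?thesis using g_nocross1 crtv by (auto simp: side1_iff)
        next
          case 2 then show ?thesis using g_nocross2 crtv by (auto simp: side2_iff)
        next
          case 3
          have kn: "k \<noteq> t" "k \<noteq> v" using 3 sf by auto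
          have "g v k = c2 v k" "g t k = c2 t k" using g22 3 kn sf by auto
          moreover have "g i t = c1 i t" "g i v = c1 i v" "g v t = c1 v t" "g t v = c1 t v" using g11 3 sf by auto
          moreover have "g i k = c1 i t * ring_inv (c1 v t) * c2 v k + c1 i v * ring_inv (c1 t v) * c2 t k" using f1 3 by auto
          ultimately show ?thesis using \<open>(r,s) = (t,v)\<close> by (simp add: add.commute)
        next
          case 4
          have kn: "i \<noteq> t" "i \<noteq> v" using 4 sf by auto
          have "g i t = c2 i t" "g i v = c2 i v" using g22 4 kn sf by auto
          moreover have "g v k = c1 v k" "g t k = c1 t k" "g v t = c1 v t" "g t v = c1 t v" using g11 4 sf by auto
          moreover have "g i k = c2 i t * ring_inv (c2 v t) * c1 v k + c2 i v * ring_inv (c2 t v) * c1 t k" using f2 4 by auto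
          ultimately show ?thesis using \<open>(r,s) = (t,v)\<close> e1 e2 by (simp add: add.commute)
        qed
      qed
    next
      case 2
      have crtv: "crosses (i,k) (t,v)" using cr 2 crosses_swap2 by simp
      show ?thesis
      proof -
        from cls[OF iP kP] consider "i \<in> ?S1 \<and> k \<in> ?S1" | "i \<in> ?S2 \<and> k \<in> ?S2"
          | "i \<in> ?S1 \<and> i \<notin> ?S2 \<and> k \<notin> ?S1 \<and> k \<in> ?S2" | "i \<notin> ?S1 \<and> i \<in> ?S2 \<and> k \<in> ?S1 \<and> k \<notin> ?S2" by blast
        then show ?thesis
        proof cases
          case 1 then show ?thesis using g_nocross1 crtv by (auto simp: side1_iff)
        next
          case 2 then show ?thesis using g_nocross2 crtv by (auto simp: side2_iff)
        next
          case 3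
          have kn: "k \<noteq> t" "k \<noteq> v" using 3 sf by auto
          have "g v k = c2 v k" "g t k = c2 t k" using g22 3 kn sf by auto
          moreover have "g i t = c1 i t" "g i v = c1 i v" "g v t = c1 v t" "g t v = c1 t v" using g11 3 sf by auto
          moreover have "g i k = c1 i t * ring_inv (c1 v t) * c2 v k + c1 i v * ring_inv (c1 t v) * c2 t k" using f1 3 by auto
          ultimately show ?thesis using \<open>(r,s) = (v,t)\<close> by (simp add: add.commute)
        next
          case 4
          have kn: "i \<noteq> t" "i \<noteq> v" using 4 sf by auto
          have "g i t = c2 i t" "g i v = c2 i v" using g22 4 kn sf by auto
          moreover have "g v k = c1 v k" "g t k = c1 t k" "g v t = c1 v t" "g t v = c1 t v" using g11 4 sf by auto
          moreover have "g i k = c2 i t * ring_inv (c2 v t) * c1 v k + c2 i v * ring_inv (c2 t v) * c1 t k" using f2 4 by auto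
          ultimately show ?thesis using \<open>(r,s) = (v,t)\<close> e1 e2 by (simp add: add.commute)
        qed
      qed
    qed
  qed
  have P5: "\<forall>c'. (\<forall>(i, k)\<in>diag ?S1. c' i k = c1 i k)
                 \<and> (\<forall>(i, k)\<in>diag ?S2. c' i k = c2 i k)
                 \<and> weak_frieze P ?D c'
                 \<longrightarrow> (\<forall>(i, k)\<in>diag P. c' i k = g i k)"
  proof (intro allI impI)
    fix c' assume H: "(\<forall>(i, k)\<in>diag ?S1. c' i k = c1 i k)
                 \<and> (\<forall>(i, k)\<in>diag ?S2. c' i k = c2 i k) \<and> weak_frieze P ?D c'"
    have a1: "c' x y = c1 x y" if "x \<in> ?S1" "y \<in> ?S1" "x \<noteq> y" for x y using H that by (auto simp: diag_def)
    have a2: "c' x y = c2 x y" if "x \<in> ?S2" "y \<in> ?S2" "x \<noteq> y" for x y using H that by (auto simp: diag_def)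
    have rel: "c' i k = c' i t * ring_inv (c' v t) * c' v k + c' i v * ring_inv (c' t v) * c' t k"
      if "(i,k) \<in> diag P" "crosses (i,k) (t,v)" for i k
      using H that unfolding weak_frieze_def by blast
    show "\<forall>(i, k)\<in>diag P. c' i k = g i k"
    proof (intro ballI, clarify)
      fix i k assume ik: "(i,k) \<in> diag P"
      then have iP: "i \<in> P" and kP: "k \<in> P" and ne: "i \<noteq> k" by (auto simp: diag_def)
      from cls[OF iP kP] consider "i \<in> ?S1 \<and> k \<in> ?S1" | "i \<in> ?S2 \<and> k \<in> ?S2"
          | "i \<in> ?S1 \<and> i \<notin> ?S2 \<and> k \<notin> ?S1 \<and> k \<in> ?S2" | "i \<notin> ?S1 \<and> i \<in> ?S2 \<and> k \<in> ?S1 \<and> k \<notin> ?S2" by blast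
      then show "c' i k = g i k"
      proof cases
        case 1 then show ?thesis using a1 g11 ne by auto
      next
        case 2 then show ?thesis using a2 g22 ne by auto
      next
        case 3
        have "crosses (i,k) (t,v)" using g_cross_tv cycU1 cycU2 3 by blast
        from rel[OF ik this] show ?thesis using 3 f1 a1 a2 sf tv
          by (metis)
      next
        case 4
        have "crosses (k,i) (t,v)" using g_cross_tv cycU1 cycU2 4 by blast
        then have "crosses (i,k) (t,v)" using crosses_swap1 by blast
        from rel[OF ik this] show ?thesis using 4 f2 a1 a2 sf tv
          by (metis)
      qed
    qed
  qed
  show ?thesis using P1 P2 P3 P4 P5 by blast
qed

end
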